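(* Let $K\ge 2$ and let $L_1,\dots,L_K:\mathbb{R}^m\to\mathbb{R}$ be differentiable loss functions, and set $L_0=\frac1K\sum_{i=1}^K L_i$. Assume that for every $i\in\{0,1,\dots,K\}$ the gradient $\nabla L_i$ is $H$-Lipschitz, i.e. $\|\nabla L_i(x)-\nabla L_i(y)\|\le H\|x-y\|$ for all $x,y\in\mathbb{R}^m$, where $0<H<\infty$, and assume $L_0^*=\inf_{\theta\in\mathbb{R}^m}L_0(\theta)>-\infty$. Fix a step size $\alpha$ with $0<\alpha\le 1/H$ and a constant $c\ge 0$, and let $(\theta_t)_{t\ge 0}$ be generated by the CAGrad algorithm described in the context. Then: (1) If $c\ge 1$, every fixed point of CAGrad (i.e. every $\theta$ at which the CAGrad update direction vanishes) is a Pareto-stationary point of $(L_0,L_1,\dots,L_K)$. (2) If $0\le c<1$, then for every $T\ge 0$, $$\sum_{t=0}^T\|\nabla L_0(\theta_t)\|^2\le \frac{2\,(L_0(\theta_0)-L_0^* )}{\alpha(1-c^2)}.$$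
   Context: CAGrad (Conflict-Averse Gradient descent) algorithm: given an initial $\theta_0\in\mathbb{R}^m$, a constant $c\ge0$ and step size $\alpha>0$, at step $t\ge1$ let $g_0=\frac1K\sum_{i=1}^K\nabla L_i(\theta_{t-1})$ and $\phi=c^2\|g_0\|^2$. Let $\mathcal W=\{w\in\mathbb{R}^K: w_i\ge0,\ \sum_i w_i=1\}$ be the probability simplex, and for $w\in\mathcal W$ let $g_w=\frac1K\sum_{i=1}^K w_i\nabla L_i(\theta_{t-1})$. Let $w$ be a minimizer over $\mathcal W$ of $F(w)=g_w^\top g_0+\sqrt{\phi}\,\|g_w\|$, and update $\theta_t=\theta_{t-1}-\alpha\big(g_0+\frac{\phi^{1/2}}{\|g_w\|}g_w\big)$. (This update direction is the solution $d$ of $\max_{d\in\mathbb{R}^m}\min_{i\in[K]}\langle\nabla L_i(\theta_{t-1}),d\rangle$ subject to $\|d-g_0\|\le c\|g_0\|$.) Pareto-stationarity: for differentiable functions $F_1,\dots,F_N$ on $\mathbb{R}^m$, a point $\theta$ is Pareto-stationary if $\min_{w\in\Delta_N}\|\sum_{j=1}^N w_j\nabla F_j(\theta)\|=0$, where $\Delta_N$ is the probability simplex in $\mathbb{R}^N$. *)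

theory Defs
  imports "HOL-Analysis.Analysis"
begin

definition prob_simplex :: "nat set \<Rightarrow> (nat \<Rightarrow> real) set" where
  "prob_simplex I = {w. (\<forall>i\<in>I. 0 \<le> w i) \<and> sum w I = 1 \<and> (\<forall>i. i \<notin> I \<longrightarrow> w i = 0)}"

definition pareto_stationary :: "nat set \<Rightarrow> (nat \<Rightarrow> 'a::euclidean_space \<Rightarrow> 'a) \<Rightarrow> 'a \<Rightarrow> bool" where
  "pareto_stationary I G x \<longleftrightarrow>
     (INF w\<in>prob_simplex I. norm (\<Sum>j\<in>I. w j *\<^sub>R G j x)) = 0"

text \<open>CAGrad quantities; G i is the gradient of L_i (i = 1..K).\<close>
definition cagrad_g0 :: "nat \<Rightarrow> (nat \<Rightarrow> 'a::euclidean_space \<Rightarrow> 'a) \<Rightarrow> 'a \<Rightarrow> 'a" where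
  "cagrad_g0 K G x = (1 / real K) *\<^sub>R (\<Sum>i=1..K. G i x)"

definition cagrad_gw :: "nat \<Rightarrow> (nat \<Rightarrow> 'a::euclidean_space \<Rightarrow> 'a) \<Rightarrow> (nat \<Rightarrow> real) \<Rightarrow> 'a \<Rightarrow> 'a" where
  "cagrad_gw K G w x = (1 / real K) *\<^sub>R (\<Sum>i=1..K. w i *\<^sub>R G i x)"

definition cagrad_phi :: "nat \<Rightarrow> real \<Rightarrow> (nat \<Rightarrow> 'a::euclidean_space \<Rightarrow> 'a) \<Rightarrow> 'a \<Rightarrow> real" where
  "cagrad_phi K c G x = c\<^sup>2 * (norm (cagrad_g0 K G x))\<^sup>2"

definition cagrad_F :: "nat \<Rightarrow> real \<Rightarrow> (nat \<Rightarrow> 'a::euclidean_space \<Rightarrow> 'a) \<Rightarrow> 'a \<Rightarrow> (nat \<Rightarrow> real) \<Rightarrow> real" where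
  "cagrad_F K c G x w =
     cagrad_gw K G w x \<bullet> cagrad_g0 K G x + sqrt (cagrad_phi K c G x) * norm (cagrad_gw K G w x)"

text \<open>d is a CAGrad update direction at x: built from some minimiser w of F over the simplex.
  (Isabelle convention: division by zero gives 0.)\<close>
definition cagrad_dir :: "nat \<Rightarrow> real \<Rightarrow> (nat \<Rightarrow> 'a::euclidean_space \<Rightarrow> 'a) \<Rightarrow> 'a \<Rightarrow> 'a \<Rightarrow> bool" where
  "cagrad_dir K c G x d \<longleftrightarrow>
     (\<exists>w\<in>prob_simplex {1..K}.
        (\<forall>v\<in>prob_simplex {1..K}. cagrad_F K c G x w \<le> cagrad_F K c G x v) \<and>
        d = cagrad_g0 K G x +
            (sqrt (cagrad_phi K c G x) / norm (cagrad_gw K G w x)) *\<^sub>R cagrad_gw K G w x)"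

definition cagrad_run :: "nat \<Rightarrow> real \<Rightarrow> real \<Rightarrow> (nat \<Rightarrow> 'a::euclidean_space \<Rightarrow> 'a) \<Rightarrow> (nat \<Rightarrow> 'a) \<Rightarrow> bool" where
  "cagrad_run K c \<alpha> G \<theta> \<longleftrightarrow>
     (\<forall>t. \<exists>d. cagrad_dir K c G (\<theta> t) d \<and> \<theta> (Suc t) = \<theta> t - \<alpha> *\<^sub>R d)"

end

theory Submission
  imports Defs
begin

lemma descent:
  fixes f :: "'a::euclidean_space \<Rightarrow> real" and g :: "'a \<Rightarrow> 'a"
  assumes gr: "\<forall>x. GDERIV f x :> g x"
    and lip: "\<forall>x y. norm (g x - g y) \<le> H * norm (x - y)"
  shows "f (x + h) \<le> f x + g x \<bullet> h + H / 2 * (norm h)\<^sup>2"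
proof -
  define \<phi> where "\<phi> s = f (x + s *\<^sub>R h) - s * (g x \<bullet> h) - H / 2 * s\<^sup>2 * (norm h)\<^sup>2" for s :: real
  have "\<phi> 1 \<le> \<phi> 0"
  proof (rule DERIV_nonpos_imp_nonincreasing[of 0 1])
    fix s :: real assume s: "0 \<le> s" "s \<le> 1"
    have c1: "((\<lambda>s. x + s *\<^sub>R h) has_derivative (\<lambda>s. s *\<^sub>R h)) (at s)"
      by (auto intro!: derivative_eq_intros)
    have c2: "(f has_derivative (\<lambda>v. v \<bullet> g (x + s *\<^sub>R h))) (at (x + s *\<^sub>R h))"
      using gr by (simp add: gderiv_def)
    have "((\<lambda>s. f (x + s *\<^sub>R h)) has_derivative (\<lambda>t. (t *\<^sub>R h) \<bullet> g (x + s *\<^sub>R h))) (at s)"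
      using has_derivative_compose[OF c1 c2] .
    moreover have "(\<lambda>t. (t *\<^sub>R h) \<bullet> g (x + s *\<^sub>R h)) = (*) (g (x + s *\<^sub>R h) \<bullet> h)"
      by (auto simp: fun_eq_iff inner_commute)
    ultimately have d1: "((\<lambda>s. f (x + s *\<^sub>R h)) has_real_derivative (g (x + s *\<^sub>R h) \<bullet> h)) (at s)"
      by (simp add: has_field_derivative_def)
    have "(\<phi> has_real_derivative (g (x + s *\<^sub>R h) \<bullet> h - g x \<bullet> h - H / 2 * (2 * s) * (norm h)\<^sup>2)) (at s)"
      unfolding \<phi>_def
      by (rule derivative_eq_intros d1 | simp)+
    moreover have "g (x + s *\<^sub>R h) \<bullet> h - g x \<bullet> h - H / 2 * (2 * s) * (norm h)\<^sup>2 \<le> 0"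
    proof -
      have "g (x + s *\<^sub>R h) \<bullet> h - g x \<bullet> h = (g (x + s *\<^sub>R h) - g x) \<bullet> h"
        by (simp add: inner_diff_left)
      also have "\<dots> \<le> norm (g (x + s *\<^sub>R h) - g x) * norm h"
        by (rule norm_cauchy_schwarz)
      also have "\<dots> \<le> H * norm (s *\<^sub>R h) * norm h"
        using lip[rule_format, of "x + s *\<^sub>R h" x] by (simp add: mult_right_mono)
      also have "\<dots> = H * s * (norm h)\<^sup>2" using s by (simp add: power2_eq_square)
      finally show ?thesis by simp
    qed
    ultimately show "\<exists>y. (\<phi> has_real_derivative y) (at s) \<and> y \<le> 0" by blast
  qed simp
  then show ?thesis unfolding \<phi>_def by simp
qed


lemma dir_close:
  assumes "cagrad_dir K c G x d" "0 \<le> c"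
  shows "norm (d - cagrad_g0 K G x) \<le> c * norm (cagrad_g0 K G x)"
proof -
  obtain w where d: "d = cagrad_g0 K G x +
            (sqrt (cagrad_phi K c G x) / norm (cagrad_gw K G w x)) *\<^sub>R cagrad_gw K G w x"
    using assms(1) unfolding cagrad_dir_def by blast
  have s: "sqrt (cagrad_phi K c G x) = c * norm (cagrad_g0 K G x)"
    using assms(2) by (simp add: cagrad_phi_def real_sqrt_mult)
  show ?thesis
  proof (cases "cagrad_gw K G w x = 0")
    case True then show ?thesis using d assms(2) by simp
  next
    case False then show ?thesis using d s assms(2) by simp
  qed
qed

lemma step_ineq:
  fixes g d :: "'a::euclidean_space"
  assumes "norm (d - g) \<le> c * norm g" "0 \<le> c" "0 < \<alpha>" "H * \<alpha> \<le> 1" "0 < H"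
  shows "g \<bullet> (- \<alpha> *\<^sub>R d) + H / 2 * (norm (- \<alpha> *\<^sub>R d))\<^sup>2 \<le> - (\<alpha> * (1 - c\<^sup>2) / 2) * (norm g)\<^sup>2"
proof -
  have e: "(norm (d - g))\<^sup>2 = (norm d)\<^sup>2 - 2 * (g \<bullet> d) + (norm g)\<^sup>2"
    by (simp add: power2_norm_eq_inner inner_diff_left inner_diff_right inner_commute)
  have n2: "(norm (d - g))\<^sup>2 \<le> c\<^sup>2 * (norm g)\<^sup>2"
    using power_mono[OF assms(1)] by (simp add: power_mult_distrib)
  have "H / 2 * (norm (- \<alpha> *\<^sub>R d))\<^sup>2 = (H * \<alpha>) * (\<alpha> / 2 * (norm d)\<^sup>2)"
    using assms(3) by (simp add: power2_eq_square)
  also have "\<dots> \<le> 1 * (\<alpha> / 2 * (norm d)\<^sup>2)"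
    by (rule mult_right_mono) (use assms in auto)
  finally have h: "H / 2 * (norm (- \<alpha> *\<^sub>R d))\<^sup>2 \<le> \<alpha> / 2 * (norm d)\<^sup>2" by simp
  have "g \<bullet> (- \<alpha> *\<^sub>R d) + \<alpha> / 2 * (norm d)\<^sup>2 = \<alpha> / 2 * ((norm (d - g))\<^sup>2 - (norm g)\<^sup>2)"
    unfolding e by (simp add: algebra_simps)
  also have "\<dots> \<le> \<alpha> / 2 * (c\<^sup>2 * (norm g)\<^sup>2 - (norm g)\<^sup>2)"
    using n2 assms(3) by (intro mult_left_mono) auto
  also have "\<dots> = - (\<alpha> * (1 - c\<^sup>2) / 2) * (norm g)\<^sup>2" by (simp add: field_simps)
  finally show ?thesis using h by linarith
qed


theorem theorem1:
  fixes K :: nat and L :: "nat \<Rightarrow> 'a::euclidean_space \<Rightarrow> real"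
    and G :: "nat \<Rightarrow> 'a \<Rightarrow> 'a"
    and H \<alpha> c :: real and \<theta> :: "nat \<Rightarrow> 'a"
  assumes K2: "K \<ge> 2"
    and L0_def: "\<forall>x. L 0 x = (1 / real K) * (\<Sum>i=1..K. L i x)"
    and grad: "\<forall>i\<in>{0..K}. \<forall>x. GDERIV (L i) x :> G i x"
    and Hpos: "0 < H"
    and lip: "\<forall>i\<in>{0..K}. \<forall>x y. norm (G i x - G i y) \<le> H * norm (x - y)"
    and bdd: "bdd_below (range (L 0))"
    and alpha: "0 < \<alpha>" "\<alpha> \<le> 1 / H"
    and c0: "0 \<le> c"
    and run: "cagrad_run K c \<alpha> (\<lambda>i. G i) \<theta>"
  shows "(1 \<le> c \<longrightarrow>
            (\<forall>x. cagrad_dir K c G x 0 \<longrightarrow> pareto_stationary {0..K} G x))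
       \<and> (c < 1 \<longrightarrow>
            (\<forall>T::nat. (\<Sum>t=0..T. (norm (G 0 (\<theta> t)))\<^sup>2)
               \<le> 2 * (L 0 (\<theta> 0) - (INF x. L 0 x)) / (\<alpha> * (1 - c\<^sup>2))))"
proof -
  have Kpos: "real K > 0" using K2 by simp
  have G0eq: "G 0 x = cagrad_g0 K G x" for x
  proof -
    have L0f: "L 0 = (\<lambda>x. (1 / real K) * (\<Sum>i=1..K. L i x))" using L0_def by auto
    have d0: "(L 0 has_derivative (\<lambda>h. h \<bullet> G 0 x)) (at x)"
      using grad by (auto simp: gderiv_def)
    have "((\<lambda>x. (1 / real K) * (\<Sum>i=1..K. L i x)) has_derivative
            (\<lambda>h. (1 / real K) * (\<Sum>i=1..K. h \<bullet> G i x))) (at x)"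
      by (intro has_derivative_mult_right has_derivative_sum) (use grad in \<open>auto simp: gderiv_def\<close>)
    then have d1: "(L 0 has_derivative (\<lambda>h. h \<bullet> cagrad_g0 K G x)) (at x)"
      unfolding L0f cagrad_g0_def by (simp add: inner_sum_right)
    have "(\<lambda>h. h \<bullet> G 0 x) = (\<lambda>h. h \<bullet> cagrad_g0 K G x)"
      using has_derivative_unique[OF d0 d1] .
    then have "(G 0 x - cagrad_g0 K G x) \<bullet> G 0 x = (G 0 x - cagrad_g0 K G x) \<bullet> cagrad_g0 K G x"
      by metis
    then have "(G 0 x - cagrad_g0 K G x) \<bullet> (G 0 x - cagrad_g0 K G x) = 0"
      by (simp add: inner_diff_right)
    then show ?thesis by simp
  qed
  have part1: "pareto_stationary {0..K} G x" if dir0: "cagrad_dir K c G x 0" and c1: "1 \<le> c" for x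
  proof -
    have ex: "\<exists>w'\<in>prob_simplex {0..K}. (\<Sum>j\<in>{0..K}. w' j *\<^sub>R G j x) = 0"
    proof -
      obtain w where w: "w \<in> prob_simplex {1..K}" and d: "0 = cagrad_g0 K G x +
            (sqrt (cagrad_phi K c G x) / norm (cagrad_gw K G w x)) *\<^sub>R cagrad_gw K G w x"
        using dir0 unfolding cagrad_dir_def by blast
      have split: "(\<Sum>j\<in>{0..K}. v j *\<^sub>R G j x) = v 0 *\<^sub>R G 0 x + (\<Sum>j=1..K. v j *\<^sub>R G j x)" for v
      proof -
        have "{0..K} = insert 0 {1..K}" by auto
        then show ?thesis by simp
      qed
      show ?thesis
      proof (cases "cagrad_g0 K G x = 0")
        case True
        define w' where "w' = (\<lambda>j::nat. if j = 0 then 1 else (0::real))"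
        have "w' \<in> prob_simplex {0..K}"
          unfolding prob_simplex_def w'_def by (auto simp: sum.delta)
        moreover have "(\<Sum>j\<in>{0..K}. w' j *\<^sub>R G j x) = 0"
          unfolding split using True G0eq[of x] by (simp add: w'_def)
        ultimately show ?thesis by blast
      next
        case False
        let ?g0 = "cagrad_g0 K G x" and ?gw = "cagrad_gw K G w x"
        have gw0: "?gw \<noteq> 0" using d False by auto
        have s: "sqrt (cagrad_phi K c G x) = c * norm ?g0"
          using c1 by (simp add: cagrad_phi_def real_sqrt_mult)
        define lam where "lam = c * norm ?g0 / norm ?gw"
        have lpos: "lam > 0" unfolding lam_def using c1 False gw0 by auto
        have g0: "?g0 = - lam *\<^sub>R ?gw" using d s unfolding lam_def
          by (metis add.commute add_eq_0_iff scaleR_minus_left)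
        define a where "a = real K / (lam + real K)"
        define b where "b = lam / (lam + real K)"
        have ab: "a + b = 1" unfolding a_def b_def using lpos Kpos by (simp add: add_divide_distrib[symmetric] add.commute)
        have comb: "a * lam = b * real K" unfolding a_def b_def by (simp add: field_simps)
        define w' where "w' = (\<lambda>j::nat. if j = 0 then a else b * w j)"
        have wp: "\<forall>i\<in>{1..K}. 0 \<le> w i" "sum w {1..K} = 1" "\<forall>i. i \<notin> {1..K} \<longrightarrow> w i = 0"
          using w unfolding prob_simplex_def by auto
        have "w' \<in> prob_simplex {0..K}"
        proof -
          have "{0..K} = insert 0 {1..K}" by auto
          then have "sum w' {0..K} = a + (\<Sum>j=1..K. b * w j)" by (simp add: w'_def)
          also have "\<dots> = 1" using wp(2) ab by (simp add: sum_distrib_left[symmetric])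
          finally have "sum w' {0..K} = 1" .
          moreover have "\<forall>i\<in>{0..K}. 0 \<le> w' i"
            using wp(1) lpos Kpos unfolding w'_def a_def b_def by auto
          moreover have "\<forall>i. i \<notin> {0..K} \<longrightarrow> w' i = 0" using wp(3) unfolding w'_def by auto
          ultimately show ?thesis unfolding prob_simplex_def by blast
        qed
        moreover have "(\<Sum>j\<in>{0..K}. w' j *\<^sub>R G j x) = 0"
        proof -
          have sw: "(\<Sum>j=1..K. w j *\<^sub>R G j x) = real K *\<^sub>R ?gw"
            unfolding cagrad_gw_def using Kpos by simp
          have "(\<Sum>j=1..K. w' j *\<^sub>R G j x) = b *\<^sub>R (\<Sum>j=1..K. w j *\<^sub>R G j x)"
            unfolding w'_def scaleR_sum_right by (intro sum.cong) auto
          then have "(\<Sum>j\<in>{0..K}. w' j *\<^sub>R G j x) = a *\<^sub>R ?g0 + b *\<^sub>R (real K *\<^sub>R ?gw)"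
            unfolding split sw G0eq[of x] by (simp add: w'_def)
          also have "\<dots> = (b * real K - a * lam) *\<^sub>R ?gw" unfolding g0 by (simp add: algebra_simps)
          also have "\<dots> = 0" using comb by simp
          finally show ?thesis .
        qed
        ultimately show ?thesis by blast
      qed
    qed
    then obtain w' where w': "w' \<in> prob_simplex {0..K}" "norm (\<Sum>j\<in>{0..K}. w' j *\<^sub>R G j x) = 0"
      by auto
    have bb: "bdd_below ((\<lambda>w. norm (\<Sum>j\<in>{0..K}. w j *\<^sub>R G j x)) ` prob_simplex {0..K})"
      by (rule bdd_belowI[of _ 0]) auto
    have le: "(INF w\<in>prob_simplex {0..K}. norm (\<Sum>j\<in>{0..K}. w j *\<^sub>R G j x)) \<le> 0"
      using cINF_lower[OF bb w'(1)] w'(2) by simp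
    have ge: "(INF w\<in>prob_simplex {0..K}. norm (\<Sum>j\<in>{0..K}. w j *\<^sub>R G j x)) \<ge> 0"
      using w'(1) by (intro cINF_greatest) auto
    show ?thesis unfolding pareto_stationary_def using le ge by linarith
  qed
  have part2: "(\<Sum>t=0..T. (norm (G 0 (\<theta> t)))\<^sup>2)
               \<le> 2 * (L 0 (\<theta> 0) - (INF x. L 0 x)) / (\<alpha> * (1 - c\<^sup>2))" if c1: "c < 1" for T
  proof -
    have Ha: "H * \<alpha> \<le> 1" using alpha Hpos by (simp add: field_simps)
    have gr0: "\<forall>x. GDERIV (L 0) x :> G 0 x" using grad by auto
    have lip0: "\<forall>x y. norm (G 0 x - G 0 y) \<le> H * norm (x - y)" using lip by auto
    define k where "k = \<alpha> * (1 - c\<^sup>2) / 2"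
    have kpos: "k > 0" unfolding k_def using alpha c1 c0
      by (simp add: power_less_one_iff abs_less_iff)
    have step: "L 0 (\<theta> (Suc t)) \<le> L 0 (\<theta> t) - k * (norm (G 0 (\<theta> t)))\<^sup>2" for t
    proof -
      obtain d where d: "cagrad_dir K c G (\<theta> t) d" "\<theta> (Suc t) = \<theta> t - \<alpha> *\<^sub>R d"
        using run unfolding cagrad_run_def by blast
      have cl: "norm (d - G 0 (\<theta> t)) \<le> c * norm (G 0 (\<theta> t))"
        using dir_close[OF d(1) c0] G0eq by simp
      have e: "\<theta> (Suc t) = \<theta> t + (- \<alpha> *\<^sub>R d)" using d(2) by simp
      have "L 0 (\<theta> (Suc t)) \<le> L 0 (\<theta> t) + G 0 (\<theta> t) \<bullet> (- \<alpha> *\<^sub>R d) + H / 2 * (norm (- \<alpha> *\<^sub>R d))\<^sup>2"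
        unfolding e by (rule descent[OF gr0 lip0])
      then show ?thesis
        using step_ineq[OF cl c0 alpha(1) Ha Hpos] unfolding k_def by linarith
    qed
    have tel: "k * (\<Sum>t=0..T. (norm (G 0 (\<theta> t)))\<^sup>2) \<le> L 0 (\<theta> 0) - L 0 (\<theta> (Suc T))" for T
    proof (induction T)
      case 0 then show ?case using step[of 0] by simp
    next
      case (Suc T) then show ?case using step[of "Suc T"] by (simp add: distrib_left)
    qed
    have "(INF x. L 0 x) \<le> L 0 (\<theta> (Suc T))" using bdd by (intro cINF_lower) auto
    then have "k * (\<Sum>t=0..T. (norm (G 0 (\<theta> t)))\<^sup>2) \<le> L 0 (\<theta> 0) - (INF x. L 0 x)"
      using tel[of T] by linarith
    then have "(\<Sum>t=0..T. (norm (G 0 (\<theta> t)))\<^sup>2) * (\<alpha> * (1 - c\<^sup>2)) \<le> 2 * (L 0 (\<theta> 0) - (INF x. L 0 x))"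
      unfolding k_def by (simp add: field_simps)
    moreover have "\<alpha> * (1 - c\<^sup>2) > 0" using kpos unfolding k_def by simp
    ultimately show ?thesis by (simp add: pos_le_divide_eq)
  qed
  show ?thesis using part1 part2 by blast
qed

end
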